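(* For each $g \geq 2$ there exists $A \in \mathrm{Sp}(2g,\mathbb{Z})$ whose leading eigenvalue is bi-Perron but none of whose eigenvalues is simple. Moreover, there are infinitely many such matrices $A$.
   Context: $\mathrm{Sp}(2g,\mathbb{Z}) = \{A \in \mathrm{GL}(2g,\mathbb{Z}) : A^t J A = J\}$, where $J$ is the $2g\times 2g$ matrix with $J_{ij} = \delta_{i(j-1)} - \delta_{(i-1)j}$. The leading eigenvalue of a matrix is its eigenvalue of largest modulus. An algebraic integer $\lambda > 1$ is bi-Perron if all its Galois conjugates lie in the annulus $\{z \in \mathbb{C} : 1/\lambda \le |z| \le \lambda\}$. An eigenvalue is simple if it is a simple root of the characteristic polynomial. *)

theory Defs
  imports "Jordan_Normal_Form.Char_Poly" "Jordan_Normal_Form.Determinant"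
begin

text \<open>The standard symplectic form J (2g x 2g), J_{ij} = delta_{i(j-1)} - delta_{(i-1)j}
  (indices shifted to 0-based, which does not change the matrix).\<close>
definition symp_J :: "nat \<Rightarrow> int mat" where
  "symp_J g = mat (2*g) (2*g) (\<lambda>(i,j). if j = i + 1 then 1 else if i = j + 1 then -1 else 0)"

definition Sp :: "nat \<Rightarrow> int mat set" where
  "Sp g = {A. A \<in> carrier_mat (2*g) (2*g) \<and> det A \<in> {1, -1} \<and>
              transpose_mat A * symp_J g * A = symp_J g}"

definition cpoly :: "int mat \<Rightarrow> complex poly" where
  "cpoly A = char_poly (map_mat of_int A)"

definition eigenvalues :: "int mat \<Rightarrow> complex set" where
  "eigenvalues A = {z. poly (cpoly A) z = 0}"

definition simple_eigenvalue :: "int mat \<Rightarrow> complex \<Rightarrow> bool" where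
  "simple_eigenvalue A z \<longleftrightarrow> z \<in> eigenvalues A \<and> order z (cpoly A) = 1"

definition leading_eigenvalue :: "int mat \<Rightarrow> complex \<Rightarrow> bool" where
  "leading_eigenvalue A z \<longleftrightarrow> z \<in> eigenvalues A \<and> (\<forall>w \<in> eigenvalues A. cmod w \<le> cmod z)"

definition algebraic_integer :: "complex \<Rightarrow> bool" where
  "algebraic_integer x \<longleftrightarrow> (\<exists>p :: int poly. lead_coeff p = 1 \<and> poly (map_poly of_int p) x = 0)"

text \<open>Galois conjugates of x: the complex roots of the minimal polynomial of x over Q,
  i.e. of any irreducible rational polynomial vanishing at x.\<close>
definition galois_conjugates :: "complex \<Rightarrow> complex set" where
  "galois_conjugates x = {z. \<exists>p :: rat poly. irreducible p \<and>
        poly (map_poly of_rat p) x = 0 \<and> poly (map_poly of_rat p) z = 0}"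

definition bi_Perron :: "complex \<Rightarrow> bool" where
  "bi_Perron x \<longleftrightarrow> x \<in> \<real> \<and> Re x > 1 \<and> algebraic_integer x \<and>
     (\<forall>z \<in> galois_conjugates x. 1 / Re x \<le> cmod z \<and> cmod z \<le> Re x)"

end

theory Submission
  imports Defs "HOL-Computational_Algebra.Polynomial_Factorial" "HOL-Computational_Algebra.Field_as_Ring"
begin


lemma det2: assumes A: "A \<in> carrier_mat 2 2"
  shows "det A = A$$(0,0) * A$$(1,1) - A$$(0,1) * A$$(1,0)"
proof -
  have "det A = (\<Sum>j<2. A $$ (0,j) * cofactor A 0 j)" by (rule laplace_expansion_row[OF A], simp)
  also have "\<dots> = A$$(0,0) * cofactor A 0 0 + A$$(0,1) * cofactor A 0 1" by (simp add: numeral_2_eq_2)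
  also have "cofactor A 0 0 = A$$(1,1)" using A
    by (simp add: cofactor_def det_single mat_delete_def)
  also have "cofactor A 0 1 = - A$$(1,0)" using A
    by (simp add: cofactor_def det_single mat_delete_def)
  finally show ?thesis by simp
qed

lemma char_poly_four_block_zero: fixes A1 :: "'a::idom mat"
  assumes A1: "A1 \<in> carrier_mat n n" and A2: "A2 \<in> carrier_mat n m" and A3: "A3 \<in> carrier_mat m m"
  shows "char_poly (four_block_mat A1 A2 (0\<^sub>m m n) A3) = char_poly A1 * char_poly A3"
proof -
  let ?cm = "\<lambda> A. [:0, 1:] \<cdot>\<^sub>m 1\<^sub>m (dim_row A) +
         map_mat (\<lambda>a. [:- a:]) A"
  let ?B2 = "map_mat (\<lambda>a. [:- a:]) A2"
  have "char_poly (four_block_mat A1 A2 (0\<^sub>m m n) A3) = det (?cm (four_block_mat A1 A2 (0\<^sub>m m n) A3))"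
    unfolding char_poly_defs using A1 A3 by simp
  also have "?cm (four_block_mat A1 A2 (0\<^sub>m m n) A3) = four_block_mat (?cm A1) ?B2 (0\<^sub>m m n) (?cm A3)"
    by (rule eq_matI, insert A1 A2 A3, auto simp: one_poly_def)
  also have "det \<dots> = det (?cm A1) * det (?cm A3)"
    by (rule det_four_block_mat_lower_left_zero[OF _ _ refl], insert A1 A2 A3, auto)
  also have "\<dots> = char_poly A1 * char_poly A3" unfolding char_poly_defs ..
  finally show ?thesis .
qed

lemma char_poly_one: "char_poly (1\<^sub>m m :: 'a::comm_ring_1 mat) = [:-1,1:]^m"
proof -
  have "char_poly (1\<^sub>m m :: 'a mat) = (\<Prod>a\<leftarrow>diag_mat (1\<^sub>m m). [:- a, 1:])"
    by (rule char_poly_upper_triangular[of _ m], auto)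
  also have "diag_mat (1\<^sub>m m :: 'a mat) = replicate m 1"
    by (rule nth_equalityI, auto simp: diag_mat_def)
  finally show ?thesis by (simp add: prod_list_replicate)
qed

lemma conj_sub: fixes p pr :: "rat poly" and x z :: complex
  assumes irr: "irreducible p" and px: "poly (map_poly of_rat p) x = 0"
   and pz: "poly (map_poly of_rat p) z = 0" and prx: "poly (map_poly of_rat pr) x = 0"
  shows "poly (map_poly of_rat pr) z = 0"
proof -
  interpret mh: map_poly_comm_ring_hom "of_rat :: rat \<Rightarrow> complex" by unfold_locales
  define d where "d = gcd p pr"
  have bz: "fst (bezout_coefficients p pr) * p + snd (bezout_coefficients p pr) * pr = d"
    unfolding d_def by (rule bezout_coefficients_fst_snd)
  have dx: "poly (map_poly of_rat d) x = 0"
    unfolding bz[symmetric] by (simp add: mh.hom_add mh.hom_mult px prx)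
  have "d dvd p" unfolding d_def by simp
  from irreducibleD'[OF irr this] have "p dvd d \<or> is_unit d" .
  moreover have "\<not> is_unit d"
  proof
    assume "is_unit d"
    then have d0: "d \<noteq> 0" "degree d = 0" by (auto simp: is_unit_iff_degree)
    then obtain c where c: "d = [:c:]" by (meson degree_eq_zeroE)
    with d0 have "c \<noteq> 0" by auto
    with c dx show False by simp
  qed
  ultimately have "p dvd d" by blast
  also have "d dvd pr" unfolding d_def by simp
  finally have "map_poly of_rat p dvd (map_poly of_rat pr :: complex poly)" by (rule mh.hom_dvd)
  then obtain r where "map_poly of_rat pr = map_poly of_rat p * (r :: complex poly)" by (auto elim: dvdE)
  then show ?thesis using pz by simp
qed



lemma sum4: "(\<Sum>k = (0::nat)..<4. f k) = f 0 + f 1 + f 2 + (f 3 :: 'a::comm_monoid_add)"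
  by (simp add: numeral_eq_Suc add.assoc)

lemma less4: "(i::nat) < 4 \<Longrightarrow> i = 0 \<or> i = 1 \<or> i = 2 \<or> i = 3" by auto

definition Mi :: "nat \<Rightarrow> int mat" where
  "Mi n = mat 2 2 (\<lambda>(i,j). if i=0 then (if j=0 then int n else -1) else (if j=0 then 1 else 0))"
definition Ni :: "int mat" where
  "Ni = mat 2 2 (\<lambda>(i,j). if i = j then 0 else -1)"
definition A1 :: "nat \<Rightarrow> int mat" where
  "A1 n = four_block_mat (Mi n) Ni (0\<^sub>m 2 2) (Mi n)"

definition a1f :: "nat \<Rightarrow> nat \<Rightarrow> nat \<Rightarrow> int" where
  "a1f n i j = (if i = 0 then (if j = 0 then int n else if j = 2 then 0 else -1)
     else if i = 1 then (if j = 0 then 1 else if j = 2 then -1 else 0)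
     else if i = 2 then (if j = 2 then int n else if j = 3 then -1 else 0)
     else (if j = 2 then 1 else 0))"

lemma A1_explicit: "A1 n = mat 4 4 (\<lambda>(i,j). a1f n i j)"
  by (rule eq_matI, auto simp: A1_def Mi_def Ni_def a1f_def)

definition Bm :: "nat \<Rightarrow> nat \<Rightarrow> int mat" where
  "Bm n m = mat 4 m (\<lambda>(i,j). if j = 0 then (if i = 0 \<or> i = 2 then 1 - int n else if i = 3 then -1 else 0) else 0)"
definition Em :: "nat \<Rightarrow> int mat" where
  "Em m = mat 4 m (\<lambda>(i,j). if i = 3 \<and> j = 0 then 1 else 0)"
definition Fm :: "nat \<Rightarrow> int mat" where
  "Fm m = mat m 4 (\<lambda>(i,j). if i = 0 \<and> j = 3 then -1 else 0)"

lemma Jdec: assumes "g \<ge> 2"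
  shows "symp_J g = four_block_mat (symp_J 2) (Em (2*g-4)) (Fm (2*g-4)) (symp_J (g-2))"
  using assms by (intro eq_matI, auto simp: symp_J_def Em_def Fm_def)

lemma blk1: "transpose_mat (A1 n) * symp_J 2 * A1 n = symp_J 2"
  unfolding A1_explicit
  apply (rule eq_matI)
  apply (simp_all add: symp_J_def)
  apply (drule less4)+
  apply (elim disjE)
  apply (simp_all add: scalar_prod_def sum4 a1f_def)
  done



definition Am :: "nat \<Rightarrow> nat \<Rightarrow> int mat" where
  "Am n g = four_block_mat (A1 n) (Bm n (2*g-4)) (0\<^sub>m (2*g-4) 4) (1\<^sub>m (2*g-4))"

lemma carr: "A1 n \<in> carrier_mat 4 4" "Bm n m \<in> carrier_mat 4 m" "Em m \<in> carrier_mat 4 m"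
  "Fm m \<in> carrier_mat m 4" "symp_J k \<in> carrier_mat (2*k) (2*k)"
  by (auto simp: A1_def Mi_def Ni_def Bm_def Em_def Fm_def symp_J_def)

lemma blk1': "transpose_mat (A1 n) * (symp_J 2 * A1 n) = symp_J 2"
  unfolding A1_explicit
  apply (rule eq_matI)
  apply (simp_all add: symp_J_def)
  apply (drule less4)+
  apply (elim disjE)
  apply (simp_all add: scalar_prod_def sum4 a1f_def)
  done

lemma blk2: "transpose_mat (A1 n) * (symp_J 2 * Bm n m) + transpose_mat (A1 n) * Em m = Em m"
  unfolding A1_explicit
  apply (rule eq_matI)
  apply (simp_all add: symp_J_def Bm_def Em_def)
  apply (drule less4)
  apply (elim disjE)
  apply (simp_all add: scalar_prod_def sum4 a1f_def)
  done

lemma blk3: "(transpose_mat (Bm n m) * symp_J 2 + Fm m) * A1 n + 0\<^sub>m m 4 = Fm m"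
  unfolding A1_explicit
  apply (rule eq_matI)
  apply (simp_all add: symp_J_def Bm_def Fm_def)
  apply (drule less4)
  apply (elim disjE)
  apply (simp_all add: scalar_prod_def sum4 a1f_def)
  done

lemma blk4: "(transpose_mat (Bm n m) * symp_J 2 + Fm m) * Bm n m + (transpose_mat (Bm n m) * Em m + J) = J"
  if "J \<in> carrier_mat m m"
  using that
  apply (intro eq_matI)
  apply (simp_all add: symp_J_def Bm_def Fm_def Em_def)
  apply (simp_all add: scalar_prod_def sum4)
  done

lemma Am_symp: assumes g: "g \<ge> 2"
  shows "transpose_mat (Am n g) * symp_J g * Am n g = symp_J g"
proof -
  define m where "m = 2*g-4"
  have J2: "symp_J (g-2) \<in> carrier_mat m m"
  proof -
    have "m = 2*(g-2)" unfolding m_def using g by arith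
    then show ?thesis using carr(5)[of "g-2"] by simp
  qed
  have J1: "symp_J 2 \<in> carrier_mat 4 4" using carr(5)[of 2] by simp
  note c = carr(1)[of n] carr(2)[of n m] carr(3)[of m] carr(4)[of m] J1 J2
  have AT: "transpose_mat (Am n g) = four_block_mat (transpose_mat (A1 n)) (0\<^sub>m 4 m) (transpose_mat (Bm n m)) (1\<^sub>m m)"
    unfolding Am_def m_def[symmetric] by (subst transpose_four_block_mat[of _ 4 4 _ m], insert c, auto)
  show ?thesis
    unfolding AT
    apply (unfold Jdec[OF g] m_def[symmetric] Am_def)
    apply (subst mult_four_block_mat[of _ 4 4 _ m _ m])
    using c apply (auto)[8]
    apply (subst mult_four_block_mat[of _ 4 4 _ m _ m])
    using c apply (auto)[8]
    using c apply (simp add: blk1' blk2 blk3 blk4)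
    done
qed

lemma Am_carrier: assumes g: "g \<ge> 2" shows "Am n g \<in> carrier_mat (2*g) (2*g)"
proof -
  have e: "2*g = 4 + (2*g-4)" using g by arith
  have "Am n g \<in> carrier_mat (4 + (2*g-4)) (4 + (2*g-4))"
    unfolding Am_def by (rule four_block_carrier_mat[OF carr(1)], simp)
  then show ?thesis by (simp only: e[symmetric])
qed

lemma MiN_carr: "Mi n \<in> carrier_mat 2 2" "Ni \<in> carrier_mat 2 2"
  by (auto simp: Mi_def Ni_def)

lemma det2M: "det (Mi n) = 1"
  by (subst det2, auto simp: Mi_def)

lemma Am_det: "det (Am n g) = 1"
proof -
  have "det (Am n g) = det (A1 n) * det (1\<^sub>m (2*g-4))" unfolding Am_def
    by (rule det_four_block_mat_lower_left_zero[OF carr(1) carr(2) refl], simp)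
  moreover have "det (A1 n) = det (Mi n) * det (Mi n)" unfolding A1_def
    by (rule det_four_block_mat_lower_left_zero[OF MiN_carr(1) MiN_carr(2) refl MiN_carr(1)])
  ultimately show ?thesis by (simp add: det2M)
qed

definition qc :: "nat \<Rightarrow> complex poly" where "qc n = [:1, - of_nat n, 1:]"

lemma cpMi: "char_poly (map_mat (of_int :: int \<Rightarrow> complex) (Mi n)) = qc n"
proof -
  have c: "char_poly_matrix (map_mat (of_int :: int \<Rightarrow> complex) (Mi n)) \<in> carrier_mat 2 2"
    by (rule char_poly_matrix_closed, simp add: Mi_def)
  show ?thesis
    unfolding char_poly_def
    apply (subst det2[OF c])
    apply (simp add: char_poly_matrix_def Mi_def qc_def)
    done
qed

lemma cpAm: "cpoly (Am n g) = qc n ^ 2 * [:-1,1:]^(2*g-4)"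
proof -
  let ?h = "of_int :: int \<Rightarrow> complex"
  have "map_mat ?h (Am n g) = four_block_mat (map_mat ?h (A1 n)) (map_mat ?h (Bm n (2*g-4))) (0\<^sub>m (2*g-4) 4) (1\<^sub>m (2*g-4))"
    unfolding Am_def by (rule eq_matI, insert carr(1)[of n] carr(2)[of n "2*g-4"], auto)
  moreover have "map_mat ?h (A1 n) = four_block_mat (map_mat ?h (Mi n)) (map_mat ?h Ni) (0\<^sub>m 2 2) (map_mat ?h (Mi n))"
    unfolding A1_def by (rule eq_matI, auto simp: Mi_def Ni_def)
  moreover have "char_poly (four_block_mat (map_mat ?h (A1 n)) (map_mat ?h (Bm n (2*g-4))) (0\<^sub>m (2*g-4) 4) (1\<^sub>m (2*g-4)))
     = char_poly (map_mat ?h (A1 n)) * char_poly (1\<^sub>m (2*g-4) :: complex mat)"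
    by (rule char_poly_four_block_zero, insert carr(1)[of n] carr(2)[of n "2*g-4"], auto)
  moreover have "char_poly (four_block_mat (map_mat ?h (Mi n)) (map_mat ?h Ni) (0\<^sub>m 2 2) (map_mat ?h (Mi n)))
     = char_poly (map_mat ?h (Mi n)) * char_poly (map_mat ?h (Mi n))"
    by (rule char_poly_four_block_zero, insert MiN_carr, auto)
  ultimately show ?thesis unfolding cpoly_def
    by (simp add: cpMi char_poly_one power2_eq_square)
qed

lemma Am00: "Am n g $$ (0,0) = int n"
  by (simp add: Am_def A1_def Mi_def Ni_def)

locale fam = fixes n :: nat assumes n3: "n \<ge> 3"
begin

definition s where "s = sqrt (real n ^ 2 - 4)"
definition lr where "lr = (real n + s) / 2"
definition lr2 where "lr2 = (real n - s) / 2"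

lemma n2: "real n ^ 2 \<ge> 4"
proof -
  have "2 * 2 \<le> real n * real n" using n3 by (intro mult_mono, auto)
  then show "real n ^ 2 \<ge> 4" unfolding power2_eq_square by linarith
qed

lemma s_sq: "s^2 = real n ^ 2 - 4"
  using n2 unfolding s_def by simp

lemma s_nn: "s \<ge> 0" using n2 unfolding s_def by simp

lemma prod1: "lr * lr2 = 1"
  unfolding lr_def lr2_def using s_sq by (simp add: field_simps power2_eq_square)

lemma sum_n: "lr + lr2 = real n"
  unfolding lr_def lr2_def by (simp add: field_simps)

lemma lr_gt1: "lr > 1" unfolding lr_def using s_nn n3 by simp

lemma lr2_eq: "lr2 = 1 / lr" using prod1 lr_gt1 by (simp add: field_simps)

lemma lr2_pos: "lr2 > 0" using lr2_eq lr_gt1 by simp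

lemma lr2_lt1: "lr2 < 1" using lr2_eq lr_gt1 by simp

lemma lr2_lt: "lr2 < lr" using lr2_lt1 lr_gt1 by linarith

abbreviation l where "l \<equiv> complex_of_real lr"
abbreviation l2 where "l2 \<equiv> complex_of_real lr2"

lemma qc_fact: "qc n = [:-l,1:] * [:-l2,1:]"
proof -
  have a: "l * l2 = 1" using prod1 by (metis of_real_1 of_real_mult)
  have b: "l + l2 = of_nat n" using sum_n by (metis of_real_add of_real_of_nat_eq)
  show ?thesis unfolding qc_def using a b
    by (simp add: algebra_simps)
qed

lemma qc_roots: "poly (qc n) z = 0 \<longleftrightarrow> z = l \<or> z = l2"
proof -
  have p: "\<And>a. poly [:-a,1:] z = z - a" by simp
  show ?thesis unfolding qc_fact poly_mult p by simp
qed

lemma eig_cases: assumes "z \<in> eigenvalues (Am n g)"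
  shows "z = l \<or> z = l2 \<or> (z = 1 \<and> 2*g-4 \<noteq> 0)"
proof -
  have "poly (qc n ^ 2 * [:-1,1:]^(2*g-4)) z = 0" using assms unfolding eigenvalues_def cpAm by simp
  then have "poly (qc n) z = 0 \<or> (z = 1 \<and> 2*g-4 \<noteq> 0)" by (auto simp: poly_power)
  then show ?thesis using qc_roots by blast
qed

lemma l_eig: "l \<in> eigenvalues (Am n g)"
  unfolding eigenvalues_def cpAm using qc_roots[of l] by (simp add: poly_power)

lemma leading: "leading_eigenvalue (Am n g) l"
  unfolding leading_eigenvalue_def
proof (intro conjI ballI l_eig)
  fix w assume "w \<in> eigenvalues (Am n g)"
  from eig_cases[OF this] show "cmod w \<le> cmod l"
    using lr2_lt lr_gt1 lr2_pos by auto
qed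

lemma cp_nz: "cpoly (Am n g) \<noteq> 0"
proof -
  have "qc n \<noteq> 0" unfolding qc_def by simp
  then show ?thesis unfolding cpAm by simp
qed

lemma nosimple: "\<not> simple_eigenvalue (Am n g) z"
proof
  assume a: "simple_eigenvalue (Am n g) z"
  then have ze: "z \<in> eigenvalues (Am n g)" and o: "order z (cpoly (Am n g)) = 1"
    unfolding simple_eigenvalue_def by auto
  have "[:-z,1:]^2 dvd cpoly (Am n g)"
  proof (cases "poly (qc n) z = 0")
    case True
    then have "[:-z,1:] dvd qc n" by (simp add: poly_eq_0_iff_dvd)
    then have "[:-z,1:]^2 dvd qc n ^ 2" by (simp add: dvd_power_same)
    then show ?thesis unfolding cpAm by (simp add: dvd_mult2)
  next
    case False
    with eig_cases[OF ze] qc_roots have z1: "z = 1" and m0: "2*g-4 \<noteq> 0" by auto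
    have "2 \<le> 2*g-4" using m0 by arith
    then have "[:-1,1:]^2 dvd ([:-1,1:]^(2*g-4) :: complex poly)" by (rule le_imp_power_dvd)
    then show ?thesis unfolding cpAm z1 by (simp add: dvd_mult)
  qed
  then have "2 \<le> order z (cpoly (Am n g))" using cp_nz order_divides by blast
  with o show False by simp
qed

lemma biP: "bi_Perron l"
  unfolding bi_Perron_def
proof (intro conjI ballI)
  show "l \<in> \<real>" by simp
  show "Re l > 1" using lr_gt1 by simp
  show "algebraic_integer l" unfolding algebraic_integer_def
  proof (intro exI conjI)
    show "lead_coeff [:1, - int n, 1:] = 1" by simp
    have "map_poly of_int [:1, - int n, 1:] = qc n" unfolding qc_def by simp
    then show "poly (map_poly of_int [:1, - int n, 1:]) l = 0" using qc_roots by simp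
  qed
  fix z assume "z \<in> galois_conjugates l"
  then obtain p :: "rat poly" where p: "irreducible p" "poly (map_poly of_rat p) l = 0"
     "poly (map_poly of_rat p) z = 0" unfolding galois_conjugates_def by auto
  have mq: "map_poly of_rat [:1, - of_nat n, 1:] = qc n" unfolding qc_def by (simp add: of_rat_minus)
  have "poly (map_poly of_rat [:1, - of_nat n, 1:]) z = (0::complex)"
    by (rule conj_sub[OF p], unfold mq, simp add: qc_roots)
  then have "z = l \<or> z = l2" unfolding mq qc_roots .
  moreover have "cmod l2 = lr2" using lr2_pos by simp
  moreover have "cmod l = lr" using lr_gt1 by simp
  moreover have "1 / lr \<le> lr" using lr2_eq lr2_lt by simp
  ultimately show "1 / Re l \<le> cmod z" "cmod z \<le> Re l"
    using lr2_eq lr2_lt by (auto simp del: norm_of_real)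
qed

end


lemma in_S: assumes g: "g \<ge> 2" and n: "n \<ge> 3"
  shows "Am n g \<in> Sp g \<and> (\<exists>l. leading_eigenvalue (Am n g) l \<and> bi_Perron l) \<and>
                     (\<forall>m. \<not> simple_eigenvalue (Am n g) m)"
proof -
  interpret fam n using n by unfold_locales
  have "Am n g \<in> Sp g" unfolding Sp_def using Am_carrier[OF g] Am_det Am_symp[OF g] by auto
  then show ?thesis using leading biP nosimple by blast
qed

theorem theorem1p4:
  fixes g :: nat
  assumes "g \<ge> 2"
  shows "(\<exists>A \<in> Sp g. (\<exists>l. leading_eigenvalue A l \<and> bi_Perron l) \<and>
                     (\<forall>m. \<not> simple_eigenvalue A m))
       \<and> infinite {A \<in> Sp g. (\<exists>l. leading_eigenvalue A l \<and> bi_Perron l) \<and>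
                     (\<forall>m. \<not> simple_eigenvalue A m)}"
proof -
  let ?S = "{A \<in> Sp g. (\<exists>l. leading_eigenvalue A l \<and> bi_Perron l) \<and>
                     (\<forall>m. \<not> simple_eigenvalue A m)}"
  have sub: "(\<lambda>n. Am n g) ` {3..} \<subseteq> ?S" using in_S[OF assms] by auto
  have inj: "inj_on (\<lambda>n. Am n g) {3..}"
  proof (rule inj_onI)
    fix x y assume "Am x g = Am y g"
    then have "Am x g $$ (0,0) = Am y g $$ (0,0)" by simp
    then show "x = y" unfolding Am00 by simp
  qed
  have "infinite ((\<lambda>n. Am n g) ` {3::nat..})"
    using finite_imageD[OF _ inj] infinite_Ici by blast
  then have inf: "infinite ?S" using sub finite_subset by blast
  have "Am 3 g \<in> ?S" using in_S[OF assms] by simp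
  then show ?thesis using inf by blast
qed

end
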